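(* In the logic $\mathsf{LC}$ (intuitionistic propositional logic extended with $(p\to q)\vee(q\to p)$, algebraized by Gödel algebras), the Takeuti–Titani (density) $\Pi_2$-rule $$\frac{\forall r\,\big(g\to((p\to r)\vee(r\to q)\vee c)\big)}{g\to((p\to q)\vee c)}$$ is admissible. Moreover, the uniform post-interpolant of $g\to((p\to r)\vee(r\to q)\vee c)$ with respect to $r$ (i.e. the formula $\forall_r$ of it, a formula in $g,p,q,c$ that is the strongest consequence-free-of-$r$ from below: for any $\Sigma$ not containing $r$, $\Sigma\vdash$ the formula iff $\Sigma\vdash$ the interpolant) is equivalent in $\mathsf{LC}$ to $g\to((p\to q)\vee c)$.
   Context: A $\Pi_2$-rule $\forall\overline p\,\Gamma/^2\phi$ (with $\phi$ not containing $\overline p$) is admissible over a logic $\vdash$ iff for every substitution $\sigma$ which fixes each variable of $\overline p$ and maps every other variable to a formula not containing variables of $\overline p$, $\vdash\sigma(\Gamma)$ implies $\vdash\sigma(\phi)$. Here $g,p,q,c,r$ are distinct propositional variables. *)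

theory Defs
  imports Main
begin

datatype fm = Var nat | Bot | And fm fm | Or fm fm | Imp fm fm

primrec vars :: "fm \<Rightarrow> nat set" where
  "vars (Var v) = {v}"
| "vars Bot = {}"
| "vars (And a b) = vars a \<union> vars b"
| "vars (Or a b) = vars a \<union> vars b"
| "vars (Imp a b) = vars a \<union> vars b"

primrec subst :: "(nat \<Rightarrow> fm) \<Rightarrow> fm \<Rightarrow> fm" where
  "subst s (Var v) = s v"
| "subst s Bot = Bot"
| "subst s (And a b) = And (subst s a) (subst s b)"
| "subst s (Or a b) = Or (subst s a) (subst s b)"
| "subst s (Imp a b) = Imp (subst s a) (subst s b)"

inductive lc_axiom :: "fm \<Rightarrow> bool" where
  ax_K:  "lc_axiom (Imp a (Imp b a))"
| ax_S:  "lc_axiom (Imp (Imp a (Imp b c)) (Imp (Imp a b) (Imp a c)))"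
| ax_C1: "lc_axiom (Imp (And a b) a)"
| ax_C2: "lc_axiom (Imp (And a b) b)"
| ax_CI: "lc_axiom (Imp a (Imp b (And a b)))"
| ax_D1: "lc_axiom (Imp a (Or a b))"
| ax_D2: "lc_axiom (Imp b (Or a b))"
| ax_DE: "lc_axiom (Imp (Imp a c) (Imp (Imp b c) (Imp (Or a b) c)))"
| ax_EF: "lc_axiom (Imp Bot a)"
| ax_LIN: "lc_axiom (Or (Imp a b) (Imp b a))"

inductive lc_derives :: "fm set \<Rightarrow> fm \<Rightarrow> bool" (infix "\<turnstile>\<^sub>L\<^sub>C" 50) where
  hyp: "a \<in> \<Gamma> \<Longrightarrow> \<Gamma> \<turnstile>\<^sub>L\<^sub>C a"
| ax:  "lc_axiom a \<Longrightarrow> \<Gamma> \<turnstile>\<^sub>L\<^sub>C a"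
| mp:  "\<Gamma> \<turnstile>\<^sub>L\<^sub>C Imp a b \<Longrightarrow> \<Gamma> \<turnstile>\<^sub>L\<^sub>C a \<Longrightarrow> \<Gamma> \<turnstile>\<^sub>L\<^sub>C b"

abbreviation lc_thm :: "fm \<Rightarrow> bool" ("\<turnstile>\<^sub>L\<^sub>C _" [50] 50) where
  "\<turnstile>\<^sub>L\<^sub>C a \<equiv> {} \<turnstile>\<^sub>L\<^sub>C a"

definition pi2_admissible :: "nat \<Rightarrow> fm list \<Rightarrow> fm \<Rightarrow> bool" where
  "pi2_admissible r \<Gamma> \<phi> \<longleftrightarrow>
     (\<forall>\<sigma>. \<sigma> r = Var r \<and> (\<forall>v. v \<noteq> r \<longrightarrow> r \<notin> vars (\<sigma> v)) \<longrightarrow>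
        (\<forall>\<gamma>\<in>set \<Gamma>. \<turnstile>\<^sub>L\<^sub>C subst \<sigma> \<gamma>) \<longrightarrow> \<turnstile>\<^sub>L\<^sub>C subst \<sigma> \<phi>)"

definition uniform_post_interpolant :: "nat \<Rightarrow> fm \<Rightarrow> fm \<Rightarrow> bool" where
  "uniform_post_interpolant r \<phi> \<psi> \<longleftrightarrow>
     r \<notin> vars \<psi> \<and>
     (\<forall>\<Sigma>. (\<forall>s\<in>\<Sigma>. r \<notin> vars s) \<longrightarrow> (\<Sigma> \<turnstile>\<^sub>L\<^sub>C \<phi> \<longleftrightarrow> \<Sigma> \<turnstile>\<^sub>L\<^sub>C \<psi>))"

definition lc_equiv :: "fm \<Rightarrow> fm \<Rightarrow> bool" where
  "lc_equiv a b \<longleftrightarrow> \<turnstile>\<^sub>L\<^sub>C Imp a b \<and> \<turnstile>\<^sub>L\<^sub>C Imp b a"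

end

theory Submission
  imports Defs
begin


lemma weaken: "\<Gamma> \<turnstile>\<^sub>L\<^sub>C a \<Longrightarrow> \<Gamma> \<subseteq> \<Delta> \<Longrightarrow> \<Delta> \<turnstile>\<^sub>L\<^sub>C a"
  by (induction rule: lc_derives.induct) (auto intro: lc_derives.intros)

lemma axm: "lc_axiom a \<Longrightarrow> \<Gamma> \<turnstile>\<^sub>L\<^sub>C a" by (rule ax)

lemma imp_refl: "\<Gamma> \<turnstile>\<^sub>L\<^sub>C Imp a a"
proof -
  have 1: "\<Gamma> \<turnstile>\<^sub>L\<^sub>C Imp (Imp a (Imp (Imp a a) a)) (Imp (Imp a (Imp a a)) (Imp a a))"
    by (rule ax, rule ax_S)
  have 2: "\<Gamma> \<turnstile>\<^sub>L\<^sub>C Imp a (Imp (Imp a a) a)" by (rule ax, rule ax_K)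
  have 3: "\<Gamma> \<turnstile>\<^sub>L\<^sub>C Imp a (Imp a a)" by (rule ax, rule ax_K)
  show ?thesis using mp[OF mp[OF 1 2] 3] .
qed

lemma deduction: "insert a \<Gamma> \<turnstile>\<^sub>L\<^sub>C b \<Longrightarrow> \<Gamma> \<turnstile>\<^sub>L\<^sub>C Imp a b"
proof (induction "insert a \<Gamma>" b rule: lc_derives.induct)
  case (hyp b)
  then show ?case
  proof
    assume "b = a" then show ?thesis using imp_refl by simp
  next
    assume "b \<in> \<Gamma>"
    then have "\<Gamma> \<turnstile>\<^sub>L\<^sub>C b" by (rule lc_derives.hyp)
    then show ?thesis using mp[OF ax[OF ax_K]] by blast
  qed
next
  case (ax b)
  then have "\<Gamma> \<turnstile>\<^sub>L\<^sub>C b" by (rule lc_derives.ax)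
  then show ?case using mp[OF lc_derives.ax[OF ax_K]] by blast
next
  case (mp b c)
  then show ?case using lc_derives.mp[OF lc_derives.mp[OF lc_derives.ax[OF ax_S]]] by blast
qed

lemma mp2: "\<Gamma> \<turnstile>\<^sub>L\<^sub>C Imp a b \<Longrightarrow> insert a \<Gamma> \<turnstile>\<^sub>L\<^sub>C b"
  by (rule mp[OF weaken[of \<Gamma>]]) (auto intro: hyp)

lemma ded_iff: "\<Gamma> \<turnstile>\<^sub>L\<^sub>C Imp a b \<longleftrightarrow> insert a \<Gamma> \<turnstile>\<^sub>L\<^sub>C b"
  using mp2 deduction by blast

lemma cut: "\<Gamma> \<turnstile>\<^sub>L\<^sub>C a \<Longrightarrow> insert a \<Gamma> \<turnstile>\<^sub>L\<^sub>C b \<Longrightarrow> \<Gamma> \<turnstile>\<^sub>L\<^sub>C b"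
  using deduction mp by blast

lemma syll: "\<Gamma> \<turnstile>\<^sub>L\<^sub>C Imp a b \<Longrightarrow> \<Gamma> \<turnstile>\<^sub>L\<^sub>C Imp b c \<Longrightarrow> \<Gamma> \<turnstile>\<^sub>L\<^sub>C Imp a c"
  by (meson deduction mp mp2 weaken subset_insertI)

lemma compact: "\<Gamma> \<turnstile>\<^sub>L\<^sub>C a \<Longrightarrow> \<exists>\<Gamma>0. finite \<Gamma>0 \<and> \<Gamma>0 \<subseteq> \<Gamma> \<and> \<Gamma>0 \<turnstile>\<^sub>L\<^sub>C a"
proof (induction rule: lc_derives.induct)
  case (hyp a \<Gamma>)
  then show ?case by (intro exI[of _ "{a}"]) (auto intro: lc_derives.hyp)
next
  case (ax a \<Gamma>)
  then show ?case by (intro exI[of _ "{}"]) (auto intro: lc_derives.ax)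
next
  case (mp \<Gamma> a b)
  then obtain A B where "finite A" "A \<subseteq> \<Gamma>" "A \<turnstile>\<^sub>L\<^sub>C Imp a b" "finite B" "B \<subseteq> \<Gamma>" "B \<turnstile>\<^sub>L\<^sub>C a" by blast
  then show ?case by (intro exI[of _ "A \<union> B"]) (meson lc_derives.mp weaken finite_UnI Un_upper1 Un_upper2 Un_least)
qed



primrec ev :: "('a\<Rightarrow>'a\<Rightarrow>bool) \<Rightarrow> 'a \<Rightarrow> 'a \<Rightarrow> (nat\<Rightarrow>'a) \<Rightarrow> fm \<Rightarrow> 'a" where
  "ev le bt tp V (Var v) = V v"
| "ev le bt tp V Bot = bt"
| "ev le bt tp V (And a b) = (if le (ev le bt tp V a) (ev le bt tp V b) then ev le bt tp V a else ev le bt tp V b)"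
| "ev le bt tp V (Or a b) = (if le (ev le bt tp V a) (ev le bt tp V b) then ev le bt tp V b else ev le bt tp V a)"
| "ev le bt tp V (Imp a b) = (if le (ev le bt tp V a) (ev le bt tp V b) then tp else ev le bt tp V b)"

locale model =
  fixes le :: "'a\<Rightarrow>'a\<Rightarrow>bool" and S :: "'a set" and bt tp :: 'a and V :: "nat \<Rightarrow> 'a"
  assumes tot: "x\<in>S \<Longrightarrow> y\<in>S \<Longrightarrow> le x y \<or> le y x"
  and antis: "x\<in>S \<Longrightarrow> y\<in>S \<Longrightarrow> le x y \<Longrightarrow> le y x \<Longrightarrow> x = y"
  and trans: "x\<in>S \<Longrightarrow> y\<in>S \<Longrightarrow> z\<in>S \<Longrightarrow> le x y \<Longrightarrow> le y z \<Longrightarrow> le x z"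
  and btS: "bt \<in> S" and tpS: "tp \<in> S" and VS: "V v \<in> S"
  and btle: "x\<in>S \<Longrightarrow> le bt x" and letp: "x\<in>S \<Longrightarrow> le x tp"
begin

abbreviation "E \<equiv> ev le bt tp V"

lemma refl: "x\<in>S \<Longrightarrow> le x x" using tot by blast

lemma evS: "E a \<in> S"
  by (induction a) (auto simp: btS tpS VS)

lemma imp_top: "E (Imp a b) = tp \<longleftrightarrow> le (E a) (E b)"
  using antis[OF evS[of b] tpS] letp[OF evS[of a]] letp[OF evS[of b]] by (auto simp: refl evS)

lemma sound: "\<Gamma> \<turnstile>\<^sub>L\<^sub>C a \<Longrightarrow> \<forall>\<gamma>\<in>\<Gamma>. E \<gamma> = tp \<Longrightarrow> E a = tp"
proof (induction rule: lc_derives.induct)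
  case (hyp a \<Gamma>)
  then show ?case by blast
next
  case (ax a \<Gamma>)
  show ?case using ax(1)
  proof cases
    case (ax_K a b)
    then show ?thesis using evS[of a] evS[of b]
      by (auto simp: refl intro: letp dest: antis)
  next
    case (ax_S a b c)
    then show ?thesis using evS[of a] evS[of b] evS[of c] tpS
      apply (simp only: ev.simps)
      by (smt (verit) antis letp refl trans tot)
  next
    case (ax_C1 a b)
    then show ?thesis using evS[of a] evS[of b] by (auto simp: refl dest: tot)
  next
    case (ax_C2 a b)
    then show ?thesis using evS[of a] evS[of b] by (auto simp: refl dest: tot)
  next
    case (ax_CI a b)
    then show ?thesis using evS[of a] evS[of b] tpS
      apply (simp only: ev.simps)
      by (smt (verit) antis letp refl trans tot)
  next
    case (ax_D1 a b)
    then show ?thesis using evS[of a] evS[of b] by (auto simp: refl dest: tot)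
  next
    case (ax_D2 a b)
    then show ?thesis using evS[of a] evS[of b] by (auto simp: refl dest: tot)
  next
    case (ax_DE a c b)
    then show ?thesis using evS[of a] evS[of b] evS[of c] tpS
      apply (simp only: ev.simps)
      by (smt (verit) antis letp refl trans tot)
  next
    case (ax_EF a)
    then show ?thesis using evS[of a] by (auto simp: btle)
  next
    case (ax_LIN a b)
    then show ?thesis using evS[of a] evS[of b] tpS by (auto simp: refl letp dest: tot antis)
  qed
next
  case (mp \<Gamma> a b)
  then show ?case using imp_top[of a b] evS[of b] letp antis tpS by metis
qed

end


lemma lindenbaum:
  assumes "\<not> \<Sigma> \<turnstile>\<^sub>L\<^sub>C \<psi>"
  shows "\<exists>P. \<Sigma> \<subseteq> P \<and> \<not> P \<turnstile>\<^sub>L\<^sub>C \<psi> \<and> (\<forall>a. P \<turnstile>\<^sub>L\<^sub>C a \<longrightarrow> a \<in> P) \<and> (\<forall>a b. Or a b \<in> P \<longrightarrow> a \<in> P \<or> b \<in> P)"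
proof -
  let ?A = "{\<Gamma>. \<Sigma> \<subseteq> \<Gamma> \<and> \<not> \<Gamma> \<turnstile>\<^sub>L\<^sub>C \<psi>}"
  have "\<exists>M\<in>?A. \<forall>X\<in>?A. M \<subseteq> X \<longrightarrow> X = M"
  proof (rule subset_Zorn_nonempty)
    show "?A \<noteq> {}" using assms by blast
  next
    fix C assume C: "C \<noteq> {}" "subset.chain ?A C"
    have "\<not> \<Union>C \<turnstile>\<^sub>L\<^sub>C \<psi>"
    proof
      assume "\<Union>C \<turnstile>\<^sub>L\<^sub>C \<psi>"
      then obtain G where G: "finite G" "G \<subseteq> \<Union>C" "G \<turnstile>\<^sub>L\<^sub>C \<psi>" using compact by blast
      then obtain B where "B \<in> C" "G \<subseteq> B" using finite_subset_Union_chain[OF G(1,2) C] by blast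
      then have "B \<in> ?A" using C(2) unfolding subset_chain_def by blast
      moreover have "B \<turnstile>\<^sub>L\<^sub>C \<psi>" using weaken[OF G(3) \<open>G \<subseteq> B\<close>] .
      ultimately show False by blast
    qed
    moreover have "\<Sigma> \<subseteq> \<Union>C"
    proof -
      obtain X where X: "X \<in> C" using C(1) by auto
      then have "X \<in> ?A" using C(2) unfolding subset_chain_def by auto
      then show ?thesis using X by auto
    qed
    ultimately show "\<Union>C \<in> ?A" by blast
  qed
  then obtain M where M0: "M \<in> ?A" and max: "\<And>X. X \<in> ?A \<Longrightarrow> M \<subseteq> X \<Longrightarrow> X = M"
    by auto
  from M0 have M: "\<Sigma> \<subseteq> M" "\<not> M \<turnstile>\<^sub>L\<^sub>C \<psi>" by auto
  have cl: "a \<in> M" if "M \<turnstile>\<^sub>L\<^sub>C a" for a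
  proof -
    have "\<not> insert a M \<turnstile>\<^sub>L\<^sub>C \<psi>" using cut[OF that] M(2) by blast
    then have "insert a M \<in> ?A" using M(1) by blast
    then have "insert a M = M" using max[of "insert a M"] by blast
    then show ?thesis by blast
  qed
  have pr: "a \<in> M \<or> b \<in> M" if "Or a b \<in> M" for a b
  proof (rule ccontr)
    assume "\<not> (a \<in> M \<or> b \<in> M)"
    then have "insert a M \<noteq> M" "insert b M \<noteq> M" by auto
    then have "insert a M \<notin> ?A" "insert b M \<notin> ?A" using max[of "insert a M"] max[of "insert b M"] by auto
    then have "insert a M \<turnstile>\<^sub>L\<^sub>C \<psi>" "insert b M \<turnstile>\<^sub>L\<^sub>C \<psi>" using M(1) by blast+
    then have "M \<turnstile>\<^sub>L\<^sub>C Imp a \<psi>" "M \<turnstile>\<^sub>L\<^sub>C Imp b \<psi>" using deduction by blast+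
    then have "M \<turnstile>\<^sub>L\<^sub>C \<psi>" using mp[OF mp[OF mp[OF ax[OF ax_DE[of a \<psi> b]]]] hyp[OF that]] by blast
    then show False using M(2) by blast
  qed
  show ?thesis using M cl pr by (intro exI[of _ M]) auto
qed

locale prime_th =
  fixes P :: "fm set" and \<psi> :: fm
  assumes cl: "P \<turnstile>\<^sub>L\<^sub>C a \<Longrightarrow> a \<in> P"
  and pr: "Or a b \<in> P \<Longrightarrow> a \<in> P \<or> b \<in> P"
  and npsi: "\<psi> \<notin> P"
begin

definition D :: "fm \<Rightarrow> fm set" where "D a = {x. Imp x a \<in> P}"

lemma inP: "a \<in> P \<longleftrightarrow> P \<turnstile>\<^sub>L\<^sub>C a" using cl hyp by blast

lemma D_le: "D a \<subseteq> D b \<longleftrightarrow> Imp a b \<in> P"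
proof
  assume "D a \<subseteq> D b"
  moreover have "a \<in> D a" unfolding D_def using imp_refl inP by blast
  ultimately show "Imp a b \<in> P" unfolding D_def by blast
next
  assume "Imp a b \<in> P" then show "D a \<subseteq> D b" unfolding D_def using syll inP by blast
qed

lemma D_tot: "D a \<subseteq> D b \<or> D b \<subseteq> D a"
proof -
  have "Or (Imp a b) (Imp b a) \<in> P" using inP ax ax_LIN by blast
  then show ?thesis using pr D_le by blast
qed

abbreviation "tp \<equiv> Imp Bot Bot"

lemma D_top: "D a = UNIV \<longleftrightarrow> a \<in> P"
proof
  assume "D a = UNIV"
  then have "Imp tp a \<in> P" unfolding D_def by blast
  then show "a \<in> P" using inP mp imp_refl by blast
next
  assume "a \<in> P" then show "D a = UNIV" unfolding D_def using inP mp ax[OF ax_K] by blast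
qed

lemma tpP: "tp \<in> P" using inP imp_refl by blast

lemma is_model: "model (\<subseteq>) (range D) (D Bot) (D tp) (\<lambda>v. D (Var v))"
proof
  fix x assume "x \<in> range D"
  then obtain a where "x = D a" by blast
  show "D Bot \<subseteq> x" unfolding \<open>x = D a\<close> D_le using inP ax[OF ax_EF] by blast
  show "x \<subseteq> D tp" using D_top tpP by blast
next
  fix x y assume "x \<in> range D" "y \<in> range D"
  then obtain a b where "x = D a" "y = D b" by blast
  then show "x \<subseteq> y \<or> y \<subseteq> x" using D_tot by simp
next
  fix x y assume "x \<subseteq> y" "y \<subseteq> x" then show "x = y" by (rule subset_antisym)
next
  fix x y z :: "fm set" assume "x \<subseteq> y" "y \<subseteq> z" then show "x \<subseteq> z" by (rule subset_trans)
qed auto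

lemma D_and: "D (And a b) = D a \<inter> D b"
proof -
  have "Imp x (And a b) \<in> P \<longleftrightarrow> Imp x a \<in> P \<and> Imp x b \<in> P" for x
  proof -
    have "insert x P \<turnstile>\<^sub>L\<^sub>C And a b \<Longrightarrow> insert x P \<turnstile>\<^sub>L\<^sub>C a"
      by (rule mp[OF ax[OF ax_C1[of a b]]])
    moreover have "insert x P \<turnstile>\<^sub>L\<^sub>C And a b \<Longrightarrow> insert x P \<turnstile>\<^sub>L\<^sub>C b"
      by (rule mp[OF ax[OF ax_C2[of a b]]])
    moreover have "insert x P \<turnstile>\<^sub>L\<^sub>C a \<Longrightarrow> insert x P \<turnstile>\<^sub>L\<^sub>C b \<Longrightarrow> insert x P \<turnstile>\<^sub>L\<^sub>C And a b"
      by (rule mp[OF mp[OF ax[OF ax_CI[of a b]]]])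
    ultimately have "insert x P \<turnstile>\<^sub>L\<^sub>C And a b \<longleftrightarrow> insert x P \<turnstile>\<^sub>L\<^sub>C a \<and> insert x P \<turnstile>\<^sub>L\<^sub>C b"
      by blast
    then show ?thesis by (simp only: inP ded_iff)
  qed
  then show ?thesis unfolding D_def by auto
qed

lemma D_or: "D (Or a b) = (if D a \<subseteq> D b then D b else D a)"
proof -
  have "Imp a (Or a b) \<in> P" "Imp b (Or a b) \<in> P"
    using inP ax[OF ax_D1[of a b]] ax[OF ax_D2[of b a]] by auto
  then have 1: "D a \<subseteq> D (Or a b)" "D b \<subseteq> D (Or a b)"
    using D_le by auto
  have 2: "D (Or a b) \<subseteq> D c" if "D a \<subseteq> D c" "D b \<subseteq> D c" for c
  proof -
    have "P \<turnstile>\<^sub>L\<^sub>C Imp a c" "P \<turnstile>\<^sub>L\<^sub>C Imp b c" using that D_le inP by auto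
    then have "P \<turnstile>\<^sub>L\<^sub>C Imp (Or a b) c" using mp[OF mp[OF ax[OF ax_DE[of a c b]]]] by blast
    then show ?thesis using D_le inP by auto
  qed
  show ?thesis
  proof (cases "D a \<subseteq> D b")
    case True
    then show ?thesis using 1 2[of b] by auto
  next
    case False
    then have "D b \<subseteq> D a" using D_tot by blast
    then show ?thesis using False 1 2[of a] by auto
  qed
qed

lemma D_imp: "D (Imp a b) = (if D a \<subseteq> D b then D tp else D b)"
proof (cases "D a \<subseteq> D b")
  case True
  then have "Imp a b \<in> P" using D_le by blast
  then have "D (Imp a b) = UNIV" "D tp = UNIV" using D_top tpP by blast+
  then show ?thesis using True by simp
next
  case False
  then have n: "Imp a b \<notin> P" using D_le by blast
  have "Or (Imp a (Imp a b)) (Imp (Imp a b) a) \<in> P" using inP ax[OF ax_LIN] by blast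
  moreover have "Imp a (Imp a b) \<notin> P"
  proof
    assume "Imp a (Imp a b) \<in> P"
    then have "P \<turnstile>\<^sub>L\<^sub>C Imp a (Imp a b)" using inP by blast
    then have "insert a P \<turnstile>\<^sub>L\<^sub>C Imp a b" by (rule mp2)
    then have "insert a P \<turnstile>\<^sub>L\<^sub>C b" using mp hyp[of a "insert a P"] by blast
    then have "P \<turnstile>\<^sub>L\<^sub>C Imp a b" by (rule deduction)
    then show False using n inP by blast
  qed
  ultimately have "Imp (Imp a b) a \<in> P" using pr by blast
  then have "P \<turnstile>\<^sub>L\<^sub>C Imp (Imp a b) a" using inP by blast
  then have "P \<turnstile>\<^sub>L\<^sub>C Imp (Imp a b) b"
    using mp[OF mp[OF ax[OF ax_S[of "Imp a b" a b]]]] imp_refl by blast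
  then have "D (Imp a b) \<subseteq> D b" using D_le inP by blast
  moreover have "D b \<subseteq> D (Imp a b)" using D_le inP ax[OF ax_K[of b a]] by blast
  ultimately show ?thesis using False by auto
qed

lemma tpU: "D tp = UNIV" using D_top tpP by blast

lemma D_imp': "D (Imp a b) = (if D a \<subseteq> D b then UNIV else D b)"
  by (simp only: D_imp[of a b] tpU)

lemma D_min: "(if D a \<subseteq> D b then D a else D b) = D a \<inter> D b"
  using D_tot[of a b] by auto

lemma truth: "ev (\<subseteq>) (D Bot) UNIV (\<lambda>v. D (Var v)) a = D a"
  by (induction a) (simp_all only: ev.simps D_and D_or D_imp' D_min)

lemma is_model': "model (\<subseteq>) (range D) (D Bot) UNIV (\<lambda>v. D (Var v))"
  using is_model tpU by simp

end

lemma completeness: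
  assumes "\<not> \<Sigma> \<turnstile>\<^sub>L\<^sub>C \<psi>"
  shows "\<exists>S bt tp (V :: nat \<Rightarrow> fm set). model (\<subseteq>) S bt tp V \<and> (\<forall>s\<in>\<Sigma>. ev (\<subseteq>) bt tp V s = tp) \<and> ev (\<subseteq>) bt tp V \<psi> \<noteq> tp"
proof -
  obtain P where P: "\<Sigma> \<subseteq> P" "\<not> P \<turnstile>\<^sub>L\<^sub>C \<psi>" "\<forall>a. P \<turnstile>\<^sub>L\<^sub>C a \<longrightarrow> a \<in> P" "\<forall>a b. Or a b \<in> P \<longrightarrow> a \<in> P \<or> b \<in> P"
    using lindenbaum[OF assms] by blast
  have "\<psi> \<notin> P" using P(2) hyp by blast
  then interpret prime_th P \<psi> using P by unfold_locales auto
  have "\<forall>s\<in>\<Sigma>. ev (\<subseteq>) (D Bot) UNIV (\<lambda>v. D (Var v)) s = UNIV"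
  proof
    fix s assume "s \<in> \<Sigma>"
    then have "D s = UNIV" using D_top P(1) by blast
    then show "ev (\<subseteq>) (D Bot) UNIV (\<lambda>v. D (Var v)) s = UNIV" by (simp only: truth)
  qed
  moreover have "ev (\<subseteq>) (D Bot) UNIV (\<lambda>v. D (Var v)) \<psi> \<noteq> UNIV"
    using D_top npsi by (simp only: truth) simp
  ultimately show ?thesis using is_model'
    by (intro exI[of _ "range D"] exI[of _ "D Bot"] exI[of _ "UNIV"] exI[of _ "\<lambda>v. D (Var v)"] conjI)
qed



definition lex :: "('a\<Rightarrow>'a\<Rightarrow>bool) \<Rightarrow> 'a\<times>bool \<Rightarrow> 'a\<times>bool \<Rightarrow> bool" where
  "lex le u w = ((le (fst u) (fst w) \<and> fst u \<noteq> fst w) \<or> (fst u = fst w \<and> (snd u \<longrightarrow> snd w)))"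

context model begin

definition S2 :: "'a \<Rightarrow> ('a\<times>bool) set" where
  "S2 w = insert (w,True) ((\<lambda>x. (x,False)) ` S)"

definition V2 :: "nat \<Rightarrow> 'a \<Rightarrow> nat \<Rightarrow> 'a\<times>bool" where
  "V2 r w v = (if v = r then (w,True) else (V v, False))"

lemma S2_sub: "w \<in> S \<Longrightarrow> u \<in> S2 w \<Longrightarrow> fst u \<in> S"
  unfolding S2_def by auto

lemma lex_antis: "fst x \<in> S \<Longrightarrow> fst y \<in> S \<Longrightarrow> lex le x y \<Longrightarrow> lex le y x \<Longrightarrow> x = y"
proof -
  assume a: "fst x \<in> S" "fst y \<in> S" "lex le x y" "lex le y x"
  have "fst x = fst y"
  proof (rule ccontr)
    assume n: "fst x \<noteq> fst y"
    then have "le (fst x) (fst y)" "le (fst y) (fst x)" using a(3,4) unfolding lex_def by auto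
    then show False using antis[OF a(1,2)] n by blast
  qed
  moreover then have "snd x = snd y" using a(3,4) unfolding lex_def by auto
  ultimately show "x = y" by (rule prod_eqI)
qed

lemma lex_trans: "fst x \<in> S \<Longrightarrow> fst y \<in> S \<Longrightarrow> fst z \<in> S \<Longrightarrow> lex le x y \<Longrightarrow> lex le y z \<Longrightarrow> lex le x z"
proof -
  assume a: "fst x \<in> S" "fst y \<in> S" "fst z \<in> S" "lex le x y" "lex le y z"
  show ?thesis
  proof (cases "fst x = fst y")
    case True
    then show ?thesis using a(4,5) unfolding lex_def by auto
  next
    case False
    then have xy: "le (fst x) (fst y)" using a(4) unfolding lex_def by auto
    show ?thesis
    proof (cases "fst y = fst z")
      case True
      then show ?thesis using xy False unfolding lex_def by auto
    next
      case F2: False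
      then have yz: "le (fst y) (fst z)" using a(5) unfolding lex_def by auto
      have xz: "le (fst x) (fst z)" using trans[OF a(1-3) xy yz] .
      have "fst x \<noteq> fst z"
      proof
        assume "fst x = fst z"
        then have "le (fst y) (fst x)" using yz by simp
        then show False using antis[OF a(1,2) xy] False by blast
      qed
      then show ?thesis using xz unfolding lex_def by auto
    qed
  qed
qed

lemma model2:
  assumes w: "w \<in> S" "w \<noteq> tp"
  shows "model (lex le) (S2 w) (bt,False) (tp,False) (V2 r w)"
proof
  fix x y assume "x \<in> S2 w" "y \<in> S2 w"
  then have "fst x \<in> S" "fst y \<in> S" using S2_sub w by auto
  then have "le (fst x) (fst y) \<or> le (fst y) (fst x)" by (rule tot)
  then show "lex le x y \<or> lex le y x" unfolding lex_def by auto
next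
  fix x y assume "x \<in> S2 w" "y \<in> S2 w" "lex le x y" "lex le y x"
  then show "x = y" by (intro lex_antis S2_sub[OF w(1)])
next
  fix x y z assume "x \<in> S2 w" "y \<in> S2 w" "z \<in> S2 w" "lex le x y" "lex le y z"
  then show "lex le x z" by (intro lex_trans[of x y z] S2_sub[OF w(1)])
next
  show "(bt, False) \<in> S2 w" "(tp, False) \<in> S2 w" unfolding S2_def using btS tpS by auto
next
  fix v show "V2 r w v \<in> S2 w" unfolding S2_def V2_def using w VS by auto
next
  fix x assume "x \<in> S2 w"
  then have "fst x \<in> S" using S2_sub w by auto
  then have "le bt (fst x)" by (rule btle)
  then show "lex le (bt, False) x" unfolding lex_def by auto
next
  fix x assume x: "x \<in> S2 w"
  have "le (fst x) tp" using S2_sub[OF w(1) x] by (rule letp)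
  moreover have "fst x = tp \<Longrightarrow> snd x = False" using x w unfolding S2_def by auto
  ultimately show "lex le x (tp, False)" unfolding lex_def by auto
qed

lemma lex_emb: "x \<in> S \<Longrightarrow> y \<in> S \<Longrightarrow> lex le (x,False) (y,False) = le x y"
  unfolding lex_def using refl by auto

lemma ev2_free: "w \<in> S \<Longrightarrow> r \<notin> vars a \<Longrightarrow> ev (lex le) (bt,False) (tp,False) (V2 r w) a = (E a, False)"
  by (induction a) (auto simp: V2_def lex_emb evS)


lemma or_ub: "le (E a) (E (Or a b)) \<and> le (E b) (E (Or a b))"
  using tot[OF evS[of a] evS[of b]] refl[OF evS[of a]] refl[OF evS[of b]] by auto

lemma refine:
  assumes fr: "r \<notin> vars G" "r \<notin> vars P" "r \<notin> vars Q" "r \<notin> vars C"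
  and ne: "E (Imp G (Or (Imp P Q) C)) \<noteq> tp"
  shows "E Q \<in> S \<and> E Q \<noteq> tp \<and>
    ev (lex le) (bt,False) (tp,False) (V2 r (E Q)) (Imp G (Or (Or (Imp P (Var r)) (Imp (Var r) Q)) C)) \<noteq> (tp,False)"
proof -
  have S: "E G \<in> S" "E P \<in> S" "E Q \<in> S" "E C \<in> S" using evS by auto
  have n1: "\<not> le (E G) (E (Or (Imp P Q) C))" using ne imp_top by blast
  have n2: "\<not> le (E G) (E (Imp P Q))"
    using n1 or_ub[of "Imp P Q" C] trans[OF evS evS evS] by blast
  have n2': "\<not> le (E G) (E C)"
    using n1 or_ub[of "Imp P Q" C] trans[OF evS evS evS] by blast
  have n3: "\<not> le (E P) (E Q)" using n2 letp[OF S(1)] by auto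
  then have "E (Imp P Q) = E Q" by simp
  then have n4: "\<not> le (E G) (E Q)" using n2 by simp
  have d: "E P \<noteq> E Q" "E G \<noteq> E Q" "E G \<noteq> E C" using n2' n3 n4 refl[OF S(1)] refl[OF S(3)] by auto
  have q: "E Q \<noteq> tp" using n3 letp S by auto
  have c: "E C \<noteq> tp" using n2' letp S by auto
  let ?E2 = "ev (lex le) (bt,False) (tp,False) (V2 r (E Q))"
  have e: "?E2 G = (E G, False)" "?E2 P = (E P, False)" "?E2 Q = (E Q, False)" "?E2 C = (E C, False)"
    "?E2 (Var r) = (E Q, True)"
    using ev2_free[OF S(3)] fr by (auto simp: V2_def)
  have l1: "\<not> lex le (E P, False) (E Q, True)" unfolding lex_def using n3 d(1) by auto
  have l2: "\<not> lex le (E Q, True) (E Q, False)" unfolding lex_def by auto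
  have l3: "\<not> lex le (E G, False) (E Q, True)" unfolding lex_def using n4 d by auto
  have l4: "\<not> lex le (E G, False) (E C, False)" unfolding lex_def using n2' d by auto
  have "?E2 (Imp P (Var r)) = (E Q, True)" using e l1 by simp
  moreover have "?E2 (Imp (Var r) Q) = (E Q, False)" using e l2 by simp
  ultimately have o1: "?E2 (Or (Imp P (Var r)) (Imp (Var r) Q)) = (E Q, True)" using l2 by simp
  show ?thesis
  proof (cases "lex le (E Q, True) (E C, False)")
    case True
    then show ?thesis using o1 e l4 c S(3) q by simp
  next
    case False
    then show ?thesis using o1 e l3 S(3) q by simp
  qed
qed

lemma mono_lemma:
  assumes "E (Imp G (Or (Imp P Q) C)) = tp"
  shows "E (Imp G (Or (Or (Imp P R) (Imp R Q)) C)) = tp"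
proof -
  have S: "E G \<in> S" "E P \<in> S" "E Q \<in> S" "E C \<in> S" "E R \<in> S" using evS by auto
  have 1: "le (E (Imp P Q)) (E (Or (Imp P R) (Imp R Q)))"
    using S tpS by (simp only: ev.simps) (smt (verit) antis letp refl trans tot)
  have 2: "le (E G) (E (Or (Imp P Q) C))" using assms imp_top by blast
  have "le (E (Or (Imp P Q) C)) (E (Or (Or (Imp P R) (Imp R Q)) C))"
    using 1 evS[of "Imp P Q"] evS[of "Or (Imp P R) (Imp R Q)"] S
    by (simp only: ev.simps) (smt (verit) antis letp refl trans tot)
  then have "le (E G) (E (Or (Or (Imp P R) (Imp R Q)) C))"
    using 2 trans evS S by blast
  then show ?thesis using imp_top by blast
qed

end

lemma key:
  assumes fr: "r \<notin> vars G" "r \<notin> vars P" "r \<notin> vars Q" "r \<notin> vars C"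
  and frS: "\<forall>s\<in>\<Sigma>. r \<notin> vars s"
  and d: "\<Sigma> \<turnstile>\<^sub>L\<^sub>C Imp G (Or (Or (Imp P (Var r)) (Imp (Var r) Q)) C)"
  shows "\<Sigma> \<turnstile>\<^sub>L\<^sub>C Imp G (Or (Imp P Q) C)"
proof (rule ccontr)
  assume nd: "\<not> \<Sigma> \<turnstile>\<^sub>L\<^sub>C Imp G (Or (Imp P Q) C)"
  then obtain S bt tp and V :: "nat \<Rightarrow> fm set" where
    m: "model (\<subseteq>) S bt tp V" and sig: "\<forall>s\<in>\<Sigma>. ev (\<subseteq>) bt tp V s = tp"
    and ne: "ev (\<subseteq>) bt tp V (Imp G (Or (Imp P Q) C)) \<noteq> tp"
    using completeness[OF nd] by (elim exE conjE) blast
  interpret M: model "(\<subseteq>)" S bt tp V by (rule m)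
  have R: "M.E Q \<in> S \<and> M.E Q \<noteq> tp \<and>
    ev (lex (\<subseteq>)) (bt,False) (tp,False) (M.V2 r (M.E Q)) (Imp G (Or (Or (Imp P (Var r)) (Imp (Var r) Q)) C)) \<noteq> (tp,False)"
    by (rule M.refine[OF fr ne])
  interpret M2: model "lex (\<subseteq>)" "M.S2 (M.E Q)" "(bt,False)" "(tp,False)" "M.V2 r (M.E Q)"
    using R by (intro M.model2) auto
  have "\<forall>s\<in>\<Sigma>. ev (lex (\<subseteq>)) (bt,False) (tp,False) (M.V2 r (M.E Q)) s = (tp,False)"
    using sig frS M.ev2_free[of "M.E Q"] R by auto
  then have "ev (lex (\<subseteq>)) (bt,False) (tp,False) (M.V2 r (M.E Q)) (Imp G (Or (Or (Imp P (Var r)) (Imp (Var r) Q)) C)) = (tp,False)"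
    by (rule M2.sound[OF d])
  then show False using R by blast
qed

lemma key2:
  assumes d: "\<Sigma> \<turnstile>\<^sub>L\<^sub>C Imp G (Or (Imp P Q) C)"
  shows "\<Sigma> \<turnstile>\<^sub>L\<^sub>C Imp G (Or (Or (Imp P R) (Imp R Q)) C)"
proof (rule ccontr)
  assume nd: "\<not> \<Sigma> \<turnstile>\<^sub>L\<^sub>C Imp G (Or (Or (Imp P R) (Imp R Q)) C)"
  then obtain S bt tp and V :: "nat \<Rightarrow> fm set" where
    m: "model (\<subseteq>) S bt tp V" and sig: "\<forall>s\<in>\<Sigma>. ev (\<subseteq>) bt tp V s = tp"
    and ne: "ev (\<subseteq>) bt tp V (Imp G (Or (Or (Imp P R) (Imp R Q)) C)) \<noteq> tp"
    using completeness[OF nd] by (elim exE conjE) blast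
  interpret M: model "(\<subseteq>)" S bt tp V by (rule m)
  have "M.E (Imp G (Or (Imp P Q) C)) = tp" by (rule M.sound[OF d sig])
  then have "M.E (Imp G (Or (Or (Imp P R) (Imp R Q)) C)) = tp" by (rule M.mono_lemma)
  then show False using ne by blast
qed

theorem mainTheorem11:
  fixes g p q c r :: nat
  assumes "distinct [g, p, q, c, r]"
  shows "pi2_admissible r
           [Imp (Var g) (Or (Or (Imp (Var p) (Var r)) (Imp (Var r) (Var q))) (Var c))]
           (Imp (Var g) (Or (Imp (Var p) (Var q)) (Var c)))
       \<and> (\<exists>\<psi>. uniform_post_interpolant r
                (Imp (Var g) (Or (Or (Imp (Var p) (Var r)) (Imp (Var r) (Var q))) (Var c))) \<psi>
             \<and> lc_equiv \<psi> (Imp (Var g) (Or (Imp (Var p) (Var q)) (Var c))))"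
proof
  show "pi2_admissible r
           [Imp (Var g) (Or (Or (Imp (Var p) (Var r)) (Imp (Var r) (Var q))) (Var c))]
           (Imp (Var g) (Or (Imp (Var p) (Var q)) (Var c)))"
    unfolding pi2_admissible_def
  proof (intro allI impI)
    fix \<sigma> assume s: "\<sigma> r = Var r \<and> (\<forall>v. v \<noteq> r \<longrightarrow> r \<notin> vars (\<sigma> v))"
    assume "\<forall>\<gamma>\<in>set [Imp (Var g) (Or (Or (Imp (Var p) (Var r)) (Imp (Var r) (Var q))) (Var c))]. \<turnstile>\<^sub>L\<^sub>C subst \<sigma> \<gamma>"
    then have d: "{} \<turnstile>\<^sub>L\<^sub>C Imp (\<sigma> g) (Or (Or (Imp (\<sigma> p) (Var r)) (Imp (Var r) (\<sigma> q))) (\<sigma> c))"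
      using s by simp
    have fr: "r \<notin> vars (\<sigma> g)" "r \<notin> vars (\<sigma> p)" "r \<notin> vars (\<sigma> q)" "r \<notin> vars (\<sigma> c)"
      using s assms by auto
    have "{} \<turnstile>\<^sub>L\<^sub>C Imp (\<sigma> g) (Or (Imp (\<sigma> p) (\<sigma> q)) (\<sigma> c))"
      by (rule key[OF fr _ d]) simp
    then show "\<turnstile>\<^sub>L\<^sub>C subst \<sigma> (Imp (Var g) (Or (Imp (Var p) (Var q)) (Var c)))" by simp
  qed
next
  let ?\<psi> = "Imp (Var g) (Or (Imp (Var p) (Var q)) (Var c))"
  have "uniform_post_interpolant r
          (Imp (Var g) (Or (Or (Imp (Var p) (Var r)) (Imp (Var r) (Var q))) (Var c))) ?\<psi>"
    unfolding uniform_post_interpolant_def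
  proof (intro conjI allI impI)
    show "r \<notin> vars ?\<psi>" using assms by auto
  next
    fix \<Sigma> :: "fm set" assume frS: "\<forall>s\<in>\<Sigma>. r \<notin> vars s"
    have fr: "r \<notin> vars (Var g)" "r \<notin> vars (Var p)" "r \<notin> vars (Var q)" "r \<notin> vars (Var c)"
      using assms by auto
    show "\<Sigma> \<turnstile>\<^sub>L\<^sub>C Imp (Var g) (Or (Or (Imp (Var p) (Var r)) (Imp (Var r) (Var q))) (Var c)) \<longleftrightarrow> \<Sigma> \<turnstile>\<^sub>L\<^sub>C ?\<psi>"
      using key[OF fr frS] key2 by blast
  qed
  moreover have "lc_equiv ?\<psi> ?\<psi>" unfolding lc_equiv_def using imp_refl by blast
  ultimately show "\<exists>\<psi>. uniform_post_interpolant r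
                (Imp (Var g) (Or (Or (Imp (Var p) (Var r)) (Imp (Var r) (Var q))) (Var c))) \<psi>
             \<and> lc_equiv \<psi> ?\<psi>" by blast
qed

end
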